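(* Let $m,K$ be positive integers and $b_1,\dots,b_{3m}$ positive integers with $K/4<b_i<K/2$ and $\sum_i b_i=mK$. Set $W=100(5m)^2K$, $a_i=b_i+W$, $L=3W+K$, $\epsilon=1/(400(5m)^2)$, $h=\lfloor 4\epsilon L\rfloor$, $H=L+h$, $\beta_0=h/H$, $\beta_i=a_i/H-1/3$ ($1\le i\le 3m$). Let $X$ be the multiset consisting of $a_1,\dots,a_{3m}$, $m$ copies of $-H$ and $m$ copies of $h$, and let $T_{\min}$ be a minimum-cost addition tree over $X$. If $z$ is an internal node of $T_{\min}$ with $z<0$, then $z$ is of the form $\lambda H$ or $(-1/3+\lambda)H$.
   Context: An addition tree over a multiset $X$ is a full binary tree whose leaves are labeled by the elements of $X$ (each used once), each internal node having value equal to the sum of its children's values; its cost is the sum of the absolute values of its internal nodes, and $T_{\min}$ minimizes the cost. Nodes are identified with their values. A "$\lambda$" denotes a sum of at most $5m$ numbers each of the form $\pm\beta_i$ with $0\le i\le 3m$. Every node value can be written as $(N/3+\lambda)H$ with $N$ an integer; since $|\lambda|\le 1/(500m)$, $N$ and the value of $\lambda$ are uniquely determined. *)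

theory Defs
  imports Main "HOL-Library.Multiset" Complex_Main
begin

datatype atree = Leaf int | Node atree atree

fun aval :: "atree \<Rightarrow> int" where
  "aval (Leaf x) = x"
| "aval (Node l r) = aval l + aval r"

fun leaves :: "atree \<Rightarrow> int multiset" where
  "leaves (Leaf x) = {#x#}"
| "leaves (Node l r) = leaves l + leaves r"

fun cost :: "atree \<Rightarrow> int" where
  "cost (Leaf x) = 0"
| "cost (Node l r) = \<bar>aval l + aval r\<bar> + cost l + cost r"

text \<open>Values of the internal nodes (nodes identified with their values).\<close>
fun internal_vals :: "atree \<Rightarrow> int set" where
  "internal_vals (Leaf x) = {}"
| "internal_vals (Node l r) = insert (aval l + aval r) (internal_vals l \<union> internal_vals r)"

definition addition_tree_over :: "int multiset \<Rightarrow> atree \<Rightarrow> bool" where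
  "addition_tree_over X t \<longleftrightarrow> leaves t = X"

definition min_cost_tree :: "int multiset \<Rightarrow> atree \<Rightarrow> bool" where
  "min_cost_tree X t \<longleftrightarrow> addition_tree_over X t \<and>
     (\<forall>t'. addition_tree_over X t' \<longrightarrow> cost t \<le> cost t')"

definition is_lambda :: "nat \<Rightarrow> (nat \<Rightarrow> real) \<Rightarrow> real \<Rightarrow> bool" where
  "is_lambda m beta x \<longleftrightarrow> (\<exists>ts :: (real \<times> nat) list.
     length ts \<le> 5 * m \<and>
     (\<forall>(s, i) \<in> set ts. (s = 1 \<or> s = -1) \<and> i \<le> 3 * m) \<and>
     x = sum_list (map (\<lambda>(s, i). s * beta i) ts))"

end

theory Submission
  imports Defs
begin


definition nf :: "int \<Rightarrow> int \<Rightarrow> int \<Rightarrow> int" where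
  "nf H h x = (if x = -H then -3 else if x = h then 0 else 1)"

lemma nf_cases: "nf H h x = 1 \<or> nf H h x = -3 \<or> nf H h x = 0"
  by (simp add: nf_def)

definition NT :: "int \<Rightarrow> int \<Rightarrow> atree \<Rightarrow> int" where
  "NT H h t = sum_mset (image_mset (nf H h) (leaves t))"

definition sc :: "int \<Rightarrow> int \<Rightarrow> atree \<Rightarrow> int" where
  "sc H h t = int (size (filter_mset (\<lambda>x. nf H h x = 1) (leaves t)))"

definition pc :: "int \<Rightarrow> int \<Rightarrow> atree \<Rightarrow> int" where
  "pc H h t = int (size (filter_mset (\<lambda>x. nf H h x = -3) (leaves t)))"

lemma NT_simps[simp]: "NT H h (Leaf x) = nf H h x" "NT H h (Node l r) = NT H h l + NT H h r"
  by (simp_all add: NT_def)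

lemma sc_simps[simp]: "sc H h (Leaf x) = (if nf H h x = 1 then 1 else 0)" "sc H h (Node l r) = sc H h l + sc H h r"
  by (simp_all add: sc_def)

lemma pc_simps[simp]: "pc H h (Leaf x) = (if nf H h x = -3 then 1 else 0)" "pc H h (Node l r) = pc H h l + pc H h r"
  by (simp_all add: pc_def)

fun fN :: "int \<Rightarrow> int \<Rightarrow> atree \<Rightarrow> int" where
  "fN H h (Leaf x) = 0"
| "fN H h (Node l r) = \<bar>NT H h l + NT H h r\<bar> + fN H h l + fN H h r"

fun cc :: "int \<Rightarrow> int \<Rightarrow> atree \<Rightarrow> int" where
  "cc H h (Leaf x) = \<bar>nf H h x\<bar>"
| "cc H h (Node l r) = (if NT H h l + NT H h r = -2 then 1 else 0)"

definition Bd2 :: "int \<Rightarrow> int \<Rightarrow> atree \<Rightarrow> int" where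
  "Bd2 H h t = sc H h t + 3 * pc H h t + \<bar>NT H h t\<bar> - 2 * cc H h t"

definition loc :: "int \<Rightarrow> int \<Rightarrow> atree \<Rightarrow> atree \<Rightarrow> int" where
  "loc H h l r = \<bar>NT H h l + NT H h r\<bar> + \<bar>NT H h l\<bar> + \<bar>NT H h r\<bar>
      + 2 * (if NT H h l + NT H h r = -2 then 1 else 0) - 2 * cc H h l - 2 * cc H h r"

lemma loc_nonneg: "loc H h l r \<ge> 0"
proof -
  have A: "nf H h x = 1 \<or> nf H h x = -3 \<or> nf H h x = 0" for x by (rule nf_cases)
  show ?thesis
  proof (cases l)
    case (Leaf x)
    note lx = this
    show ?thesis
    proof (cases r)
      case (Leaf y) then show ?thesis using lx A[of x] A[of y] by (auto simp: loc_def)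
    next
      case (Node r1 r2) then show ?thesis using lx A[of x] by (auto simp: loc_def)
    qed
  next
    case (Node l1 l2)
    note ln = this
    show ?thesis
    proof (cases r)
      case (Leaf y) then show ?thesis using ln A[of y] by (auto simp: loc_def)
    next
      case (Node r1 r2) then show ?thesis using ln by (auto simp: loc_def)
    qed
  qed
qed

lemma Bd2_Leaf: "Bd2 H h (Leaf x) = 0"
  using nf_cases[of H h x] by (auto simp: Bd2_def)

lemma Bd2_Node: "2 * fN H h (Node l r) - Bd2 H h (Node l r) = (2 * fN H h l - Bd2 H h l) + (2 * fN H h r - Bd2 H h r) + loc H h l r"
  by (simp add: Bd2_def loc_def)

lemma lowerA: "Bd2 H h t \<le> 2 * fN H h t"
proof (induction t)
  case (Leaf x) then show ?case by (simp add: Bd2_Leaf)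
next
  case (Node l r) then show ?case using Bd2_Node[of H h l r] loc_nonneg[of H h l r] by linarith
qed

lemma tight_split:
  assumes "2 * fN H h (Node l r) = Bd2 H h (Node l r)"
  shows "2 * fN H h l = Bd2 H h l" "2 * fN H h r = Bd2 H h r" "loc H h l r = 0"
  using assms Bd2_Node[of H h l r] loc_nonneg[of H h l r] lowerA[of H h l] lowerA[of H h r] by linarith+

lemma bad_child:
  assumes "loc H h l r = 0" "l = Node l1 l2" "NT H h l \<le> -2"
  shows "NT H h l = -2 \<and> (\<exists>x'. r = Leaf x' \<and> nf H h x' = 1)"
proof (cases r)
  case (Leaf y) then show ?thesis using assms nf_cases[of H h y] by (auto simp: loc_def split: if_splits)
next
  case (Node r1 r2) then show ?thesis using assms by (auto simp: loc_def split: if_splits)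
qed

lemma bad_node:
  assumes "loc H h l1 l2 = 0" "NT H h l1 + NT H h l2 = -2"
  shows "\<exists>x y. nf H h x = 1 \<and> nf H h y = -3 \<and> (l1 = Leaf x \<and> l2 = Leaf y \<or> l1 = Leaf y \<and> l2 = Leaf x)"
proof (cases l1)
  case (Leaf x)
  note lx = this
  show ?thesis
  proof (cases l2)
    case (Leaf y) then show ?thesis using lx assms nf_cases[of H h x] nf_cases[of H h y] by (auto simp: loc_def)
  next
    case (Node r1 r2) then show ?thesis using lx assms nf_cases[of H h x] by (auto simp: loc_def split: if_splits)
  qed
next
  case (Node a b)
  note ln = this
  show ?thesis
  proof (cases l2)
    case (Leaf y) then show ?thesis using ln assms nf_cases[of H h y] by (auto simp: loc_def split: if_splits)
  next
    case (Node r1 r2) then show ?thesis using ln assms by (auto simp: loc_def split: if_splits)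
  qed
qed

fun subtrees :: "atree \<Rightarrow> atree set" where
  "subtrees (Leaf x) = {Leaf x}"
| "subtrees (Node l r) = insert (Node l r) (subtrees l \<union> subtrees r)"

definition special :: "int \<Rightarrow> int \<Rightarrow> atree \<Rightarrow> atree \<Rightarrow> bool" where
  "special H h l r \<longleftrightarrow> (\<exists>x y x'. r = Leaf x' \<and> nf H h x' = 1 \<and> nf H h x = 1 \<and> nf H h y = -3 \<and>
       (l = Node (Leaf x) (Leaf y) \<or> l = Node (Leaf y) (Leaf x)))"

definition Good :: "int \<Rightarrow> int \<Rightarrow> atree \<Rightarrow> bool" where
  "Good H h t \<longleftrightarrow> (\<forall>l r. Node l r \<in> subtrees t \<longrightarrow>
      ((\<exists>a b. l = Node a b) \<and> NT H h l \<le> -2 \<longrightarrow> special H h l r) \<and>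
      ((\<exists>a b. r = Node a b) \<and> NT H h r \<le> -2 \<longrightarrow> special H h r l))"

lemma special_of:
  assumes "loc H h l r = 0" "l = Node l1 l2" "NT H h l \<le> -2" "2 * fN H h l = Bd2 H h l"
  shows "special H h l r"
proof -
  from bad_child[OF assms(1-3)] obtain x' where n2: "NT H h l = -2" and r: "r = Leaf x'" "nf H h x' = 1" by blast
  have "loc H h l1 l2 = 0" using tight_split[of H h l1 l2] assms(2,4) by simp
  from bad_node[OF this] n2 assms(2) obtain x y where "nf H h x = 1 \<and> nf H h y = -3 \<and> (l1 = Leaf x \<and> l2 = Leaf y \<or> l1 = Leaf y \<and> l2 = Leaf x)"
    by auto
  then show ?thesis using r assms(2) unfolding special_def by blast
qed

lemma loc_sym: "loc H h l r = loc H h r l"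
  by (simp add: loc_def algebra_simps)

lemma tight_Good: "2 * fN H h t = Bd2 H h t \<Longrightarrow> Good H h t"
proof (induction t)
  case (Leaf x) then show ?case by (simp add: Good_def)
next
  case (Node l r)
  note ts = tight_split[OF Node.prems]
  have Gl: "Good H h l" using Node.IH(1) ts(1) .
  have Gr: "Good H h r" using Node.IH(2) ts(2) .
  have top1: "special H h l r" if "\<exists>a b. l = Node a b" "NT H h l \<le> -2"
    using special_of[OF ts(3) _ that(2) ts(1)] that(1) by blast
  have top2: "special H h r l" if "\<exists>a b. r = Node a b" "NT H h r \<le> -2"
    using special_of[of H h r l, OF _ _ that(2) ts(2)] that(1) ts(3) loc_sym[of H h l r] by auto
  show ?case unfolding Good_def
  proof (intro allI impI)
    fix a b assume "Node a b \<in> subtrees (Node l r)"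
    then consider "Node a b = Node l r" | "Node a b \<in> subtrees l" | "Node a b \<in> subtrees r" by auto
    then show "((\<exists>c d. a = Node c d) \<and> NT H h a \<le> -2 \<longrightarrow> special H h a b) \<and>
      ((\<exists>c d. b = Node c d) \<and> NT H h b \<le> -2 \<longrightarrow> special H h b a)"
    proof cases
      case 1 then show ?thesis using top1 top2 by auto
    next
      case 2 then show ?thesis using Gl unfolding Good_def by blast
    next
      case 3 then show ?thesis using Gr unfolding Good_def by blast
    qed
  qed
qed


lemma aval_sum: "aval t = sum_mset (leaves t)"
  by (induction t) auto

lemma subtree_self: "t \<in> subtrees t"
  by (cases t) auto

lemma subtree_leaves: "v \<in> subtrees t \<Longrightarrow> leaves v \<subseteq># leaves t"
proof (induction t)
  case (Leaf x) then show ?case by simp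
next
  case (Node l r)
  then show ?case
    by (auto intro: subset_mset.order_trans[OF _ mset_subset_eq_add_left]
                    subset_mset.order_trans[OF _ mset_subset_eq_add_right])
qed

lemma subtree_parent: "v \<in> subtrees t \<Longrightarrow> v \<noteq> t \<Longrightarrow> \<exists>l r. Node l r \<in> subtrees t \<and> (v = l \<or> v = r)"
proof (induction t)
  case (Leaf x) then show ?case by simp
next
  case (Node l r)
  show ?case
  proof (cases "v = l \<or> v = r")
    case True then show ?thesis by auto
  next
    case False
    then have "v \<in> subtrees l \<and> v \<noteq> l \<or> v \<in> subtrees r \<and> v \<noteq> r" using Node.prems by auto
    then show ?thesis using Node.IH by auto
  qed
qed

lemma internal_node: "z \<in> internal_vals t \<Longrightarrow> \<exists>l r. Node l r \<in> subtrees t \<and> aval l + aval r = z"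
  by (induction t) auto

lemma replace:
  assumes "s \<in> subtrees t" "leaves s' = leaves s" "cost s' < cost s"
  shows "\<exists>t'. leaves t' = leaves t \<and> cost t' < cost t"
  using assms(1)
proof (induction t)
  case (Leaf x) then show ?case using assms by auto
next
  case (Node l r)
  consider "s = Node l r" | "s \<in> subtrees l" | "s \<in> subtrees r" using Node.prems by auto
  then show ?case
  proof cases
    case 1 then show ?thesis using assms by auto
  next
    case 2
    then obtain l' where "leaves l' = leaves l" "cost l' < cost l" using Node.IH(1) by blast
    moreover then have "aval l' = aval l" by (simp add: aval_sum)
    ultimately show ?thesis by (intro exI[of _ "Node l' r"]) auto
  next
    case 3
    then obtain r' where "leaves r' = leaves r" "cost r' < cost r" using Node.IH(2) by blast
    moreover then have "aval r' = aval r" by (simp add: aval_sum)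
    ultimately show ?thesis by (intro exI[of _ "Node l r'"]) auto
  qed
qed

definition dev :: "int \<Rightarrow> int \<Rightarrow> int \<Rightarrow> int" where
  "dev H h x = 3 * x - nf H h x * H"

lemma dev_sum: "3 * aval t - NT H h t * H = sum_mset (image_mset (dev H h) (leaves t))"
  by (induction t) (auto simp: dev_def algebra_simps)

lemma sum_mset_nonneg_int: "(\<And>x. (f::int\<Rightarrow>int) x \<ge> 0) \<Longrightarrow> sum_mset (image_mset f M) \<ge> 0"
  by (induction M) (auto simp: add_nonneg_nonneg)

lemma sum_mset_mono_sub:
  fixes f :: "int \<Rightarrow> int"
  assumes "A \<subseteq># B" "\<And>x. f x \<ge> 0"
  shows "sum_mset (image_mset f A) \<le> sum_mset (image_mset f B)"
proof -
  have "B = A + (B - A)" using assms(1) by (simp add: subset_mset.add_diff_inverse)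
  then have "sum_mset (image_mset f B) = sum_mset (image_mset f A) + sum_mset (image_mset f (B - A))"
    by (metis image_mset_union sum_mset.union)
  moreover have "sum_mset (image_mset f (B - A)) \<ge> 0" using assms(2) sum_mset_nonneg_int by blast
  ultimately show ?thesis by linarith
qed

lemma abs_sum_mset: "\<bar>sum_mset (image_mset (f::int\<Rightarrow>int) M)\<bar> \<le> sum_mset (image_mset (\<lambda>x. \<bar>f x\<bar>) M)"
  by (induction M) (auto intro: order_trans[OF abs_triangle_ineq])

lemma abs_close: "\<bar>(u::int) - v\<bar> \<le> D \<Longrightarrow> \<bar>v\<bar> - D \<le> \<bar>u\<bar> \<and> \<bar>u\<bar> \<le> \<bar>v\<bar> + D"
  by arith

lemma dev_bound:
  assumes "leaves t \<subseteq># X"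
  shows "\<bar>3 * aval t - NT H h t * H\<bar> \<le> sum_mset (image_mset (\<lambda>x. \<bar>dev H h x\<bar>) X)"
proof -
  have "\<bar>sum_mset (image_mset (dev H h) (leaves t))\<bar> \<le> sum_mset (image_mset (\<lambda>x. \<bar>dev H h x\<bar>) (leaves t))"
    by (rule abs_sum_mset)
  also have "\<dots> \<le> sum_mset (image_mset (\<lambda>x. \<bar>dev H h x\<bar>) X)"
    by (rule sum_mset_mono_sub[OF assms]) auto
  finally show ?thesis by (simp add: dev_sum)
qed

fun nint :: "atree \<Rightarrow> int" where
  "nint (Leaf x) = 0"
| "nint (Node l r) = 1 + nint l + nint r"

lemma nint_size: "nint t = int (size (leaves t)) - 1"
  by (induction t) auto

lemma cost_bounds:
  assumes "leaves t \<subseteq># X" "H > 0" "D = sum_mset (image_mset (\<lambda>x. \<bar>dev H h x\<bar>) X)"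
  shows "fN H h t * H - nint t * D \<le> 3 * cost t \<and> 3 * cost t \<le> fN H h t * H + nint t * D"
  using assms(1)
proof (induction t)
  case (Leaf x) then show ?case by simp
next
  case (Node l r)
  have sl: "leaves l \<subseteq># X" using Node.prems
    by (auto intro: subset_mset.order_trans[OF mset_subset_eq_add_left])
  have sr: "leaves r \<subseteq># X" using Node.prems
    by (auto intro: subset_mset.order_trans[OF mset_subset_eq_add_right])
  have d: "\<bar>3 * aval (Node l r) - NT H h (Node l r) * H\<bar> \<le> D"
    using dev_bound[OF Node.prems, of H h] assms(3) by simp
  have hv: "\<bar>(NT H h l + NT H h r) * H\<bar> = \<bar>NT H h l + NT H h r\<bar> * H" using assms(2) by (simp add: abs_mult)
  have hu: "\<bar>3 * (aval l + aval r)\<bar> = 3 * \<bar>aval l + aval r\<bar>" by (simp only: abs_mult)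
  have "\<bar>3 * (aval l + aval r) - (NT H h l + NT H h r) * H\<bar> \<le> D" using d by (simp add: algebra_simps)
  from abs_close[OF this] hv hu have e1: "\<bar>NT H h l + NT H h r\<bar> * H - D \<le> 3 * \<bar>aval l + aval r\<bar>"
    and e2: "3 * \<bar>aval l + aval r\<bar> \<le> \<bar>NT H h l + NT H h r\<bar> * H + D" by auto
  show ?case using Node.IH(1)[OF sl] Node.IH(2)[OF sr] e1 e2 by (simp add: algebra_simps)
qed


lemma filter_all: "(\<forall>x\<in>#M. P x) \<Longrightarrow> filter_mset P M = M"
  by (induction M) auto

lemma filter_none: "(\<forall>x\<in>#M. \<not> P x) \<Longrightarrow> filter_mset P M = {#}"
  by (induction M) auto

lemma sum_mset_le_const: "(\<forall>x\<in>#M. (f::int \<Rightarrow> int) x \<le> c) \<Longrightarrow> sum_mset (image_mset f M) \<le> int (size M) * c"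
  by (induction M) (auto simp: algebra_simps)

lemma NT_sc_pc: "NT H h t = sc H h t - 3 * pc H h t"
  by (induction t) (use nf_cases in \<open>auto simp: algebra_simps\<close>)

fun comb :: "atree list \<Rightarrow> atree" where
  "comb [] = Leaf 0"
| "comb [t] = t"
| "comb (t # u # ts) = Node t (comb (u # ts))"

lemma comb_leaves: "ts \<noteq> [] \<Longrightarrow> leaves (comb ts) = sum_list (map leaves ts)"
  by (induction ts rule: comb.induct) auto

lemma comb_fN: "ts \<noteq> [] \<Longrightarrow> (\<forall>t\<in>set ts. NT H h t = 0) \<Longrightarrow>
   NT H h (comb ts) = 0 \<and> fN H h (comb ts) = sum_list (map (fN H h) ts)"
  by (induction ts rule: comb.induct) auto

fun llist :: "atree \<Rightarrow> int list" where
  "llist (Leaf x) = [x]"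
| "llist (Node l r) = llist l @ llist r"

lemma mset_llist: "mset (llist t) = leaves t"
  by (induction t) auto

lemma llist_sum: "H \<noteq> 0 \<Longrightarrow> sum_list (map (\<lambda>x. real_of_int x / real_of_int H - real_of_int (nf H h x) / 3) (llist t))
   = real_of_int (aval t) / real_of_int H - real_of_int (NT H h t) / 3"
  by (induction t) (auto simp: add_divide_distrib)

lemma nf_m3: "nf H h y = -3 \<Longrightarrow> y = -H"
  by (auto simp: nf_def split: if_splits)

lemma rot_leaf:
  assumes "nf H h x = 1" "nf H h y = -3" "0 < x" "3 * x < H" "0 < x'" "3 * x' < H"
  shows "cost (Node (Node (Leaf x) (Leaf x')) (Leaf y)) < cost (Node (Node (Leaf x) (Leaf y)) (Leaf x'))"
proof -
  have y: "y = -H" using nf_m3[OF assms(2)] .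
  show ?thesis using assms y by auto
qed

lemma rot:
  assumes "special H h u w" "s = Node u w \<or> s = Node w u"
    and pos: "\<forall>x\<in>#leaves s. nf H h x = 1 \<longrightarrow> 0 < x \<and> 3 * x < H"
  shows "\<exists>s'. leaves s' = leaves s \<and> cost s' < cost s"
proof -
  obtain x y x' where w: "w = Leaf x'" and n: "nf H h x' = 1" "nf H h x = 1" "nf H h y = -3"
    and u: "u = Node (Leaf x) (Leaf y) \<or> u = Node (Leaf y) (Leaf x)"
    using assms(1) unfolding special_def by blast
  have xin: "x \<in># leaves s" "x' \<in># leaves s" using assms(2) u w by auto
  have b: "0 < x" "3 * x < H" "0 < x'" "3 * x' < H" using pos xin n by auto
  have y: "y = -H" using nf_m3[OF n(3)] .
  let ?s' = "Node (Node (Leaf x) (Leaf x')) (Leaf y)"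
  have "leaves ?s' = leaves s" using assms(2) u w by auto
  moreover have "cost ?s' < cost s" using assms(2) u w b y by auto
  ultimately show ?thesis by blast
qed


lemma sum_list_const: "(\<forall>k\<in>set xs. f k = (c::int)) \<Longrightarrow> sum_list (map f xs) = int (length xs) * c"
  by (induction xs) (auto simp: algebra_simps)

lemma sum_list_concat_map: "sum_list (map F (concat (map g xs))) = sum_list (map (\<lambda>x. sum_list (map F (g x))) xs)"
  by (induction xs) auto

lemma length_concat_le: "(\<forall>x. length (g x) \<le> 1) \<Longrightarrow> length (concat (map g xs)) \<le> length xs"
proof (induction xs)
  case Nil then show ?case by simp
next
  case (Cons a xs)
  have "length (g a) \<le> 1" using Cons.prems by blast
  then show ?case using Cons.IH[OF Cons.prems] by simp
qed

lemma leaves_rep: "sum_list (map leaves (replicate n (Leaf c))) = replicate_mset n c"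
  by (induction n) auto

lemma grp_leaves:
  "sum_list (map (\<lambda>k. leaves (Node (Node (Node (Leaf (a (3*k+1))) (Leaf (a (3*k+2)))) (Leaf (-H))) (Leaf (a (3*k+3))))) [0..<n])
   = image_mset a (mset [1..<3*n+1]) + replicate_mset n (-H)"
proof (induction n)
  case 0 then show ?case by simp
next
  case (Suc n)
  have u: "[1..<3 * Suc n + 1] = [1..<3*n+1] @ [3*n+1, 3*n+2, 3*n+3]"
  proof -
    have "[1..<3 * Suc n + 1] = [1..<(3*n+1) + 3]" by simp
    also have "\<dots> = [1..<3*n+1] @ [3*n+1..<(3*n+1)+3]" by (rule upt_add_eq_append) simp
    also have "[3*n+1..<(3*n+1)+3] = [3*n+1, 3*n+2, 3*n+3]" by (simp add: upt_rec)
    finally show ?thesis .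
  qed
  have z: "[0..<Suc n] = [0..<n] @ [n]" by simp
  show ?case unfolding z u using Suc by (simp del: upt_Suc upt.simps add: add_mset_commute)
qed


theorem lemma2p9:
  fixes m K :: nat and b :: "nat \<Rightarrow> int" and T :: atree and z :: int
    and W L h H :: int and a :: "nat \<Rightarrow> int" and eps :: real
    and beta :: "nat \<Rightarrow> real" and X :: "int multiset"
  assumes m_pos: "m > 0" and K_pos: "K > 0"
    and b_pos: "\<forall>i\<in>{1..3*m}. b i > 0"
    and b_bounds: "\<forall>i\<in>{1..3*m}. real K / 4 < real_of_int (b i) \<and> real_of_int (b i) < real K / 2"
    and b_sum: "(\<Sum>i=1..3*m. b i) = int (m * K)"
  defines "W \<equiv> 100 * (5 * int m)^2 * int K"
    and "a \<equiv> (\<lambda>i. b i + W)"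
    and "L \<equiv> 3 * W + int K"
    and "eps \<equiv> 1 / (400 * (5 * real m)^2)"
    and "h \<equiv> \<lfloor>4 * eps * real_of_int L\<rfloor>"
    and "H \<equiv> L + h"
    and "beta \<equiv> (\<lambda>i. if i = 0 then real_of_int h / real_of_int H
                     else real_of_int (a i) / real_of_int H - 1/3)"
    and "X \<equiv> image_mset a (mset [1..<3*m+1]) + replicate_mset m (- H) + replicate_mset m h"
  assumes Tmin: "min_cost_tree X T"
    and z_node: "z \<in> internal_vals T" and z_neg: "z < 0"
  shows "\<exists>lam. is_lambda m beta lam \<and>
           (real_of_int z = lam * real_of_int H \<or> real_of_int z = (-1/3 + lam) * real_of_int H)"
proof -
  have m1: "int m \<ge> 1" using m_pos by simp
  have K1: "int K \<ge> 1" using K_pos by simp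
  have Wv: "W = 2500 * (int m)^2 * int K" unfolding W_def by (simp add: power2_eq_square algebra_simps)
  have Lv: "L = 7500 * (int m)^2 * int K + int K" unfolding L_def Wv by simp
  have mm: "(int m)^2 \<ge> int m" using m1 by (simp add: power2_eq_square)
  have mr: "real m > 0" using m_pos by simp
  have hreal: "4 * eps * real_of_int L = 3 * real K + real K / (2500 * (real m)^2)"
    unfolding eps_def Lv using mr by (simp add: field_simps power2_eq_square)
  have kk: "real K / (2500 * (real m)^2) \<le> real K"
  proof -
    have "real m \<ge> 1" using m_pos by simp
    then have "(1::real) \<le> (real m)^2" by (simp add: one_le_power)
    then have "(1::real) \<le> 2500 * (real m)^2" by linarith
    then show ?thesis by (simp add: divide_le_eq mult_le_cancel_left1 K_pos)
  qed
  have h_lo: "3 * int K \<le> h"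
  proof -
    have "real_of_int (3 * int K) \<le> 4 * eps * real_of_int L" using hreal by simp
    then show ?thesis unfolding h_def by (simp add: le_floor_iff)
  qed
  have h_hi: "h \<le> 4 * int K"
  proof -
    have "real_of_int h \<le> 4 * eps * real_of_int L" unfolding h_def by (rule of_int_floor_le)
    also have "\<dots> \<le> real_of_int (4 * int K)" using hreal kk by simp
    finally show ?thesis by (simp only: of_int_le_iff)
  qed
  have mk: "1 \<le> (int m)^2 * int K"
  proof -
    have "1 * 1 \<le> (int m)^2 * int K" by (rule mult_mono) (use mm m1 K1 in auto)
    then show ?thesis by simp
  qed
  have Hbig: "H \<ge> 7500 * (int m)^2 * int K" unfolding H_def Lv using h_lo K1 by simp
  have Hpos: "H > 0" using Hbig mk by linarith
  have Wbig: "W \<ge> 2500 * int K"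
  proof -
    have "1 * int K \<le> (int m)^2 * int K" by (rule mult_right_mono) (use mm m1 in auto)
    then show ?thesis unfolding Wv by simp
  qed
  have bfacts: "0 < b i \<and> 2 * b i < int K" if "i \<in> {1..3*m}" for i
  proof -
    have "real_of_int (b i) < real K / 2" using b_bounds that by blast
    then have "real_of_int (2 * b i) < real_of_int (int K)" by simp
    then have "2 * b i < int K" by (simp only: of_int_less_iff)
    then show ?thesis using b_pos that by blast
  qed
  have afacts: "0 < a i \<and> 3 * a i < H \<and> h < a i \<and> \<bar>3 * a i - H\<bar> \<le> int K + h" if "i \<in> {1..3*m}" for i
  proof -
    have b: "0 < b i" "2 * b i < int K" using bfacts[OF that] by auto
    have e: "3 * a i - H = 3 * b i - int K - h" unfolding a_def H_def L_def by simp
    have "\<bar>3 * a i - H\<bar> \<le> int K + h" unfolding e abs_le_iff using b h_lo by linarith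
    moreover have "0 < a i" using b h_lo h_hi Wbig K1 unfolding a_def H_def L_def by linarith
    moreover have "3 * a i < H"
    proof -
      have "3 * a i = 3 * b i + 3 * W" unfolding a_def by simp
      moreover have "H = 3 * W + int K + h" unfolding H_def L_def by simp
      ultimately show ?thesis using b h_lo by linarith
    qed
    moreover have "h < a i" using b h_lo h_hi Wbig K1 unfolding a_def H_def L_def by linarith
    ultimately show ?thesis by blast
  qed
  have nf_a: "nf H h (a i) = 1" if "i \<in> {1..3*m}" for i
    using afacts[OF that] Hpos h_lo K1 unfolding nf_def by auto
  have nf_mH: "nf H h (-H) = -3" by (simp add: nf_def)
  have nf_h: "nf H h h = 0" using Hpos h_lo K1 unfolding nf_def by auto
  have Xmem: "(\<exists>i\<in>{1..3*m}. x = a i) \<or> x = -H \<or> x = h" if "x \<in># X" for x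
    using that unfolding X_def by (auto split: if_splits)
  have Xa: "\<exists>i\<in>{1..3*m}. x = a i" if "x \<in># X" "nf H h x = 1" for x
    using Xmem[OF that(1)] that(2) nf_mH nf_h by auto
  have sizeX: "size X = 5 * m" unfolding X_def by simp
  define D where "D = sum_mset (image_mset (\<lambda>x. \<bar>dev H h x\<bar>) X)"
  have D0: "D \<ge> 0" unfolding D_def by (rule sum_mset_nonneg_int) simp
  have devb: "\<bar>dev H h x\<bar> \<le> int K + 3 * h" if xX: "x \<in># X" for x
  proof -
    consider (A) i where "i\<in>{1..3*m}" "x = a i" | (B) "x = -H" | (C) "x = h" using Xmem[OF xX] by blast
    then show ?thesis
    proof cases
      case A then show ?thesis using afacts[OF A(1)] nf_a[OF A(1)] h_lo unfolding dev_def by auto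
    next
      case B then show ?thesis using nf_mH h_lo unfolding dev_def by simp
    next
      case C then show ?thesis using nf_h h_lo unfolding dev_def by simp
    qed
  qed
  have Dle: "D \<le> 65 * int m * int K"
  proof -
    have "D \<le> int (size X) * (int K + 3 * h)" unfolding D_def by (rule sum_mset_le_const) (use devb in blast)
    also have "\<dots> \<le> int (5 * m) * (13 * int K)" unfolding sizeX using h_hi h_lo K1
      by (intro mult_left_mono) auto
    finally show ?thesis by simp
  qed
  have LT: "leaves T = X" using Tmin unfolding min_cost_tree_def addition_tree_over_def by blast
  have Tmin2: "cost T \<le> cost t'" if "leaves t' = X" for t'
    using Tmin that unfolding min_cost_tree_def addition_tree_over_def by blast
  have scT: "sc H h T = 3 * int m"
  proof -
    have "filter_mset (\<lambda>x. nf H h x = 1) X = image_mset a (mset [1..<3*m+1])"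
      unfolding X_def using nf_a nf_mH nf_h
      by (auto simp: filter_all filter_none)
    then show ?thesis unfolding sc_def LT by simp
  qed
  have pcT: "pc H h T = int m"
  proof -
    have "filter_mset (\<lambda>x. nf H h x = -3) X = replicate_mset m (-H)"
      unfolding X_def using nf_a nf_mH nf_h
      by (auto simp: filter_all filter_none)
    then show ?thesis unfolding pc_def LT by simp
  qed
  have NTT: "NT H h T = 0" using scT pcT NT_sc_pc[of H h T] by simp
  obtain Tl Tr where TN: "T = Node Tl Tr"
  proof (cases T)
    case (Leaf x) then have "size X = 1" using LT by auto
    then show ?thesis using sizeX m_pos by simp
  next
    case (Node l r) then show ?thesis using that by blast
  qed
  have BdT: "Bd2 H h T = 6 * int m" unfolding Bd2_def using scT pcT NTT TN by simp
  define grp where "grp k = Node (Node (Node (Leaf (a (3*k+1))) (Leaf (a (3*k+2)))) (Leaf (-H))) (Leaf (a (3*k+3)))" for k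
  define tl0 where "tl0 = map grp [0..<m] @ replicate m (Leaf h)"
  define T0 where "T0 = comb tl0"
  have tl0ne: "tl0 \<noteq> []" unfolding tl0_def using m_pos by simp
  have LT0: "leaves T0 = X"
  proof -
    have rr: "sum_list (replicate n {#c#}) = replicate_mset n c" for n and c :: int by (induction n) auto
    have "leaves T0 = sum_list (map leaves tl0)" unfolding T0_def by (rule comb_leaves[OF tl0ne])
    also have "\<dots> = sum_list (map leaves (map grp [0..<m])) + replicate_mset m h"
      unfolding tl0_def by (simp add: rr)
    also have "sum_list (map leaves (map grp [0..<m])) = image_mset a (mset [1..<3*m+1]) + replicate_mset m (-H)"
      unfolding grp_def map_map o_def by (rule grp_leaves)
    finally show ?thesis unfolding X_def by simp
  qed
  have grpN: "NT H h (grp k) = 0 \<and> fN H h (grp k) = 3" if "k < m" for k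
  proof -
    have "3*k+1 \<in> {1..3*m}" "3*k+2 \<in> {1..3*m}" "3*k+3 \<in> {1..3*m}" using that by auto
    then show ?thesis unfolding grp_def using nf_a nf_mH by simp
  qed
  have allN: "\<forall>t\<in>set tl0. NT H h t = 0" unfolding tl0_def using grpN nf_h by auto
  have fT0: "fN H h T0 = 3 * int m"
  proof -
    have "fN H h T0 = sum_list (map (fN H h) tl0)" unfolding T0_def using comb_fN[OF tl0ne allN] by blast
    also have "\<dots> = sum_list (map (fN H h \<circ> grp) [0..<m]) + sum_list (map (fN H h) (replicate m (Leaf h)))"
      unfolding tl0_def by simp
    also have "sum_list (map (fN H h \<circ> grp) [0..<m]) = int m * 3"
      by (subst sum_list_const[where c=3]) (use grpN in auto)
    also have "sum_list (map (fN H h) (replicate m (Leaf h))) = 0"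
      by (subst sum_list_const[where c=0]) auto
    finally show ?thesis by simp
  qed
  have sub: "leaves T \<subseteq># X" "leaves T0 \<subseteq># X" using LT LT0 by auto
  have ni: "nint T = 5 * int m - 1" "nint T0 = 5 * int m - 1" using nint_size LT LT0 sizeX by auto
  have cb1: "fN H h T * H - nint T * D \<le> 3 * cost T" using cost_bounds[OF sub(1) Hpos D_def] by blast
  have cb2: "3 * cost T0 \<le> fN H h T0 * H + nint T0 * D" using cost_bounds[OF sub(2) Hpos D_def] by blast
  have cTT0: "cost T \<le> cost T0" using Tmin2[OF LT0] .
  have DH: "2 * (5 * int m) * D < H"
  proof -
    have "2 * (5 * int m) * D \<le> 2 * (5 * int m) * (65 * int m * int K)"
      using Dle m1 by (intro mult_left_mono) auto
    also have "\<dots> = 650 * (int m)^2 * int K" by (simp add: power2_eq_square)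
    also have "\<dots> < 7500 * (int m)^2 * int K" using mk by linarith
    finally show ?thesis using Hbig by linarith
  qed
  have fle: "fN H h T * H < (3 * int m + 1) * H"
  proof -
    have "fN H h T * H \<le> 3 * int m * H + 2 * (5 * int m - 1) * D"
      using cb1 cb2 cTT0 fT0 ni by (simp add: algebra_simps)
    also have "\<dots> \<le> 3 * int m * H + 2 * (5 * int m) * D" using D0 by (simp add: algebra_simps)
    also have "\<dots> < (3 * int m + 1) * H" using DH by (simp add: algebra_simps)
    finally show ?thesis .
  qed
  have fT: "fN H h T \<le> 3 * int m" using fle Hpos mult_less_cancel_right by fastforce
  have tightT: "2 * fN H h T = Bd2 H h T" using lowerA[of H h T] BdT fT by linarith
  have GT: "Good H h T" by (rule tight_Good[OF tightT])
  obtain l r where uin: "Node l r \<in> subtrees T" and zv: "aval l + aval r = z"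
    using internal_node[OF z_node] by blast
  define u where "u = Node l r"
  have uX: "leaves u \<subseteq># X" using subtree_leaves[OF uin] LT unfolding u_def by simp
  have devu: "\<bar>3 * z - NT H h u * H\<bar> \<le> D"
    using dev_bound[OF uX, of H h] zv unfolding D_def u_def by simp
  have DltH: "D < H" using DH D0 m1 by (smt (verit) mult_le_cancel_right1)
  have Nle0: "NT H h u \<le> 0"
  proof (rule ccontr)
    assume "\<not> NT H h u \<le> 0"
    then have "1 * H \<le> NT H h u * H" using Hpos by (intro mult_right_mono) auto
    then show False using devu DltH z_neg by linarith
  qed
  have posX: "\<forall>x\<in>#leaves s. nf H h x = 1 \<longrightarrow> 0 < x \<and> 3 * x < H" if "s \<in> subtrees T" for s
  proof (intro ballI impI)
    fix x assume "x \<in># leaves s" "nf H h x = 1"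
    then have "x \<in># X" using subtree_leaves[OF that] LT by (metis mset_subset_eqD)
    then obtain i where "i \<in> {1..3*m}" "x = a i" using Xa \<open>nf H h x = 1\<close> by blast
    then show "0 < x \<and> 3 * x < H" using afacts by blast
  qed
  have Nge: "NT H h u \<ge> -1"
  proof (rule ccontr)
    assume "\<not> NT H h u \<ge> -1"
    then have bad: "NT H h u \<le> -2" by simp
    have "u \<noteq> T" using bad NTT by auto
    then obtain p q where pq: "Node p q \<in> subtrees T" "u = p \<or> u = q"
      using subtree_parent[OF uin[folded u_def]] by blast
    have sp: "special H h u q \<and> Node p q = Node u q \<or> special H h u p \<and> Node p q = Node p u"
      using GT pq bad unfolding Good_def u_def by blast
    have "\<exists>s'. leaves s' = leaves (Node p q) \<and> cost s' < cost (Node p q)"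
      using sp rot[OF _ _ posX[OF pq(1)]] by blast
    then obtain T' where "leaves T' = leaves T" "cost T' < cost T"
      using replace[OF pq(1)] by blast
    then show False using Tmin2 LT by fastforce
  qed
  define idx where "idx x = (SOME i. i \<in> {1..3*m} \<and> a i = x)" for x
  have idx: "idx x \<in> {1..3*m} \<and> a (idx x) = x" if ix: "x \<in># X" "nf H h x = 1" for x
  proof -
    obtain i where "i \<in> {1..3*m}" "x = a i" using Xa[OF ix] by blast
    then show ?thesis unfolding idx_def by (metis (mono_tags, lifting) someI)
  qed
  define g where "g x = (if nf H h x = 1 then [(1::real, idx x)] else if nf H h x = 0 then [(1::real, 0::nat)] else [])" for x
  define ts where "ts = concat (map g (llist u))"
  define F where "F = (\<lambda>(s::real, i::nat). s * beta i)"
  define lam where "lam = sum_list (map F ts)"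
  have Hne: "H \<noteq> 0" using Hpos by simp
  have setl: "x \<in># X" if "x \<in> set (llist u)" for x
  proof -
    have "x \<in># leaves u" using that mset_llist[of u] by (metis set_mset_mset)
    then show ?thesis using uX by (metis mset_subset_eqD)
  qed
  have gx: "sum_list (map F (g x)) = real_of_int x / real_of_int H - real_of_int (nf H h x) / 3" if xX2: "x \<in># X" for x
  proof -
    consider "nf H h x = 1" | "nf H h x = 0" | "nf H h x = -3" using nf_cases by blast
    then show ?thesis
    proof cases
      case 1
      have "idx x \<noteq> 0" "a (idx x) = x" using idx[OF xX2 1] by auto
      then show ?thesis using 1 unfolding g_def F_def beta_def by simp
    next
      case 2
      then have "x = h" unfolding nf_def by (auto split: if_splits)
      then show ?thesis using 2 unfolding g_def F_def beta_def by simp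
    next
      case 3
      then have "x = -H" by (rule nf_m3)
      then show ?thesis using 3 Hne unfolding g_def F_def by simp
    qed
  qed
  have lamv: "lam = real_of_int z / real_of_int H - real_of_int (NT H h u) / 3"
  proof -
    have "lam = sum_list (map (\<lambda>x. sum_list (map F (g x))) (llist u))"
      unfolding lam_def ts_def by (rule sum_list_concat_map)
    also have "\<dots> = sum_list (map (\<lambda>x. real_of_int x / real_of_int H - real_of_int (nf H h x) / 3) (llist u))"
      using gx setl by (intro arg_cong[where f=sum_list] map_cong) auto
    also have "\<dots> = real_of_int (aval u) / real_of_int H - real_of_int (NT H h u) / 3"
      by (rule llist_sum[OF Hne])
    finally show ?thesis using zv unfolding u_def by simp
  qed
  have islam: "is_lambda m beta lam"
    unfolding is_lambda_def
  proof (intro exI[of _ ts] conjI)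
    have "length ts \<le> length (llist u)" unfolding ts_def by (rule length_concat_le) (auto simp: g_def)
    also have "length (llist u) = size (leaves u)" by (metis mset_llist size_mset)
    also have "\<dots> \<le> size X" using uX by (rule size_mset_mono)
    finally show "length ts \<le> 5 * m" using sizeX by simp
  next
    show "\<forall>(s, i)\<in>set ts. (s = 1 \<or> s = -1) \<and> i \<le> 3 * m"
    proof (intro ballI)
      fix p assume "p \<in> set ts"
      then obtain x where x: "x \<in> set (llist u)" "p \<in> set (g x)" unfolding ts_def by auto
      have "x \<in># X" using setl[OF x(1)] .
      then show "case p of (s, i) \<Rightarrow> (s = 1 \<or> s = -1) \<and> i \<le> 3 * m"
        using x(2) idx unfolding g_def by (auto split: if_splits)
    qed
  next
    show "lam = sum_list (map (\<lambda>(s, i). s * beta i) ts)" unfolding lam_def F_def ..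
  qed
  have zeq: "real_of_int z = (real_of_int (NT H h u) / 3 + lam) * real_of_int H"
    using lamv Hne by (simp add: field_simps)
  have "NT H h u = 0 \<or> NT H h u = -1" using Nle0 Nge by linarith
  then show ?thesis
  proof
    assume "NT H h u = 0"
    then show ?thesis using zeq islam by auto
  next
    assume "NT H h u = -1"
    then show ?thesis using zeq islam by auto
  qed
qed

end
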